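(* Let $d_m\in\mathbb{N}$, $\mathcal{D}=\{-d_m,\dots,d_m\}$, $\rho=|\rho|e^{\jmath\theta}$ with $|\rho|\in(0,1]$, $\bar\rho=\sqrt{1-|\rho|^2}$, $\mathrm{SNR}=|\rho|^2/\bar\rho^2$, and $E(\mathrm{SNR})=\frac{\mathrm{SNR}}{2+\mathrm{SNR}}=\frac{|\rho|^2}{2-|\rho|^2}$. Let $\{x[n]\}_{n\in\mathbb{Z}}$, $\{z[n]\}_{n\in\mathbb{Z}}$ be mutually independent i.i.d. $\mathcal{CN}(0,1)$ sequences, $d$ uniform on $\mathcal{D}$ and independent of them, and $y[n]=\rho\,x[n-d]+\bar\rho\,z[n]$. For $k\in\mathbb{N}$, $N=2^k$, let $J=\arg\max_{0\le n\le N-1}|x[n]|^2$ and $\widehat d_{\mathrm{MMIE}}=\arg\max_{\ell\in\mathcal{D}}|y[J+\ell]|^2$. Then $$\lim_{k\to\infty}\mathbb{P}(\widehat d_{\mathrm{MMIE}}\neq d)=0.$$ Moreover, $d_m$ need not be fixed: the same conclusion holds when $d_m=d_m(k)$ varies with $k$ provided $d_m=o\big(2^{kE(\mathrm{SNR})}\big)$. Equivalently, since $N=2^k$, $\mathbb{P}(\widehat d_{\mathrm{MMIE}}\neq d)\to0$ as $N\to\infty$.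
   Context: $\mathcal{CN}(0,1)$ denotes the circularly-symmetric complex Gaussian distribution with zero mean and unit variance; $\jmath$ is the imaginary unit. $J$ is the $k$-bit message sent from the encoder to the decoder. *)

theory Defs
  imports "HOL-Probability.Probability" "HOL-Library.Landau_Symbols"
begin

text \<open>Circularly-symmetric complex Gaussian CN(0,1): real and imaginary parts
  independent, each N(0,1/2) (standard deviation sqrt(1/2)).\<close>
definition cgauss :: "complex measure" where
  "cgauss = distr (density lborel (normal_density 0 (sqrt (1/2)))
                   \<Otimes>\<^sub>M density lborel (normal_density 0 (sqrt (1/2))))
                  borel (\<lambda>(a, b). Complex a b)"

definition delay_space :: "nat \<Rightarrow> ((int \<Rightarrow> complex) \<times> (int \<Rightarrow> complex) \<times> int) measure" where
  "delay_space dm = PiM UNIV (\<lambda>_::int. cgauss)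
                    \<Otimes>\<^sub>M (PiM UNIV (\<lambda>_::int. cgauss)
                    \<Otimes>\<^sub>M measure_pmf (pmf_of_set {- int dm .. int dm}))"

definition rx_signal :: "complex \<Rightarrow> (int \<Rightarrow> complex) \<Rightarrow> (int \<Rightarrow> complex) \<Rightarrow> int \<Rightarrow> int \<Rightarrow> complex" where
  "rx_signal \<rho> x z d n = \<rho> * x (n - d) + complex_of_real (sqrt (1 - (cmod \<rho>)\<^sup>2)) * z n"

text \<open>J = argmax_{0 \<le> n \<le> N-1} |x[n]|^2 (ties, a null event, broken by the least index).\<close>
definition mmie_J :: "(int \<Rightarrow> complex) \<Rightarrow> nat \<Rightarrow> int" where
  "mmie_J x N = int (LEAST n::nat. n < N \<and> (\<forall>m<N. (cmod (x (int m)))\<^sup>2 \<le> (cmod (x (int n)))\<^sup>2))"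

text \<open>MMIE estimate: argmax over l in {-dm..dm} of |y[J+l]|^2
  (ties, a null event, broken by the least l).\<close>
definition mmie_dhat :: "(int \<Rightarrow> complex) \<Rightarrow> int \<Rightarrow> nat \<Rightarrow> int" where
  "mmie_dhat y J dm =
     int (LEAST i::nat. i \<le> 2 * dm \<and>
            (\<forall>j\<le>2 * dm. (cmod (y (J + int j - int dm)))\<^sup>2 \<le> (cmod (y (J + int i - int dm)))\<^sup>2))
     - int dm"

definition mmie_error_event :: "complex \<Rightarrow> nat \<Rightarrow> nat \<Rightarrow> ((int \<Rightarrow> complex) \<times> (int \<Rightarrow> complex) \<times> int) set" where
  "mmie_error_event \<rho> dm k =
     {(x, z, d) \<in> space (delay_space dm).
        mmie_dhat (rx_signal \<rho> x z d) (mmie_J x (2 ^ k)) dm \<noteq> d}"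

definition mmie_perr :: "complex \<Rightarrow> nat \<Rightarrow> nat \<Rightarrow> real" where
  "mmie_perr \<rho> dm k = measure (delay_space dm) (mmie_error_event \<rho> dm k)"

text \<open>E(SNR) = SNR/(2+SNR) = |rho|^2/(2-|rho|^2).\<close>
definition mmie_E :: "complex \<Rightarrow> real" where
  "mmie_E \<rho> = (cmod \<rho>)\<^sup>2 / (2 - (cmod \<rho>)\<^sup>2)"

end

theory Submission
  imports Defs
begin

lemma nn_integral_even:
  fixes f :: "real \<Rightarrow> ennreal"
  assumes [measurable]: "f \<in> borel_measurable borel" and ev: "\<And>x. f (- x) = f x"
  shows "(\<integral>\<^sup>+x. f x \<partial>lborel) = 2 * (\<integral>\<^sup>+x. f x * indicator {0..} x \<partial>lborel)"
proof -
  have "(\<integral>\<^sup>+x. f x \<partial>lborel) = (\<integral>\<^sup>+x. f x * indicator {0..} x + f x * indicator {..<0} x \<partial>lborel)"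
    by (intro nn_integral_cong) (auto split: split_indicator)
  also have "\<dots> = (\<integral>\<^sup>+x. f x * indicator {0..} x \<partial>lborel) + (\<integral>\<^sup>+x. f x * indicator {..<0} x \<partial>lborel)"
    by (intro nn_integral_add) auto
  also have "(\<integral>\<^sup>+x. f x * indicator {..<0} x \<partial>lborel) = (\<integral>\<^sup>+x. f (0 + (-1) * x) * indicator {..<0} (0 + (-1) * x) \<partial>lborel)"
    using nn_integral_real_affine[of "\<lambda>x. f x * indicator {..<0} x" "-1" 0] by simp
  also have "\<dots> = (\<integral>\<^sup>+x. f x * indicator {0..} x \<partial>lborel)"
    by (intro nn_integral_cong_AE AE_I[where N="{0}"]) (auto simp: ev split: split_indicator)
  finally show ?thesis by (simp add: mult_2)
qed

lemma gauss_inner: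
  fixes c t :: real assumes c: "0 < c" and t: "0 \<le> t"
  shows "(\<integral>\<^sup>+a. ennreal (\<bar>a\<bar> * exp (- (a\<^sup>2 * c)) * indicator {a. t \<le> a\<^sup>2 * c} a) \<partial>lborel)
     = ennreal (exp (- t) / c)"
proof -
  define s0 where "s0 = sqrt (t / c)"
  have s0: "0 \<le> s0" using c t by (simp add: s0_def)
  have iff: "0 \<le> a \<Longrightarrow> (t \<le> a\<^sup>2 * c) = (s0 \<le> a)" for a
  proof -
    assume a: "0 \<le> a"
    have "(t \<le> a\<^sup>2 * c) = (t / c \<le> a\<^sup>2)" using c by (simp add: divide_le_eq)
    also have "\<dots> = (sqrt (t / c) \<le> sqrt (a\<^sup>2))" by (rule real_sqrt_le_iff[symmetric])
    also have "\<dots> = (s0 \<le> a)" using a by (simp add: s0_def)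
    finally show ?thesis .
  qed
  have "(\<integral>\<^sup>+a. ennreal (\<bar>a\<bar> * exp (- (a\<^sup>2 * c)) * indicator {a. t \<le> a\<^sup>2 * c} a) \<partial>lborel)
      = 2 * (\<integral>\<^sup>+a. ennreal (\<bar>a\<bar> * exp (- (a\<^sup>2 * c)) * indicator {a. t \<le> a\<^sup>2 * c} a) * indicator {0..} a \<partial>lborel)"
    by (rule nn_integral_even) (auto split: split_indicator)
  also have "(\<integral>\<^sup>+a. ennreal (\<bar>a\<bar> * exp (- (a\<^sup>2 * c)) * indicator {a. t \<le> a\<^sup>2 * c} a) * indicator {0..} a \<partial>lborel)
     = (\<integral>\<^sup>+a. ennreal (a * exp (- (a\<^sup>2 * c))) * indicator {s0..} a \<partial>lborel)"
    using s0 by (intro nn_integral_cong) (auto simp: iff split: split_indicator)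
  also have "\<dots> = ennreal (0 - (- exp (- (s0\<^sup>2 * c)) / (2 * c)))"
  proof (rule nn_integral_FTC_atLeast)
    show "((\<lambda>a. - exp (- (a\<^sup>2 * c)) / (2 * c)) \<longlongrightarrow> 0) at_top"
    proof -
      have "((\<lambda>a. - exp (- (a\<^sup>2 * c)) / (2 * c)) \<longlongrightarrow> - 0 / (2 * c)) at_top"
        apply (intro tendsto_intros filterlim_compose[OF exp_at_bot] filterlim_compose[OF filterlim_uminus_at_bot_at_top])
        using c apply (auto intro!: filterlim_pow_at_top filterlim_ident filterlim_at_top_mult_tendsto_pos[OF tendsto_const c])
        done
      then show ?thesis by simp
    qed
  qed (insert s0 c, auto intro!: derivative_eq_intros simp: field_simps)
  also have "exp (- (s0\<^sup>2 * c)) = exp (- t)" using c t by (simp add: s0_def)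
  also have "2 * ennreal (0 - (- exp (- t) / (2 * c))) = ennreal (2 * (exp (- t) / (2 * c)))"
    using c by (subst ennreal_mult) auto
  finally show ?thesis using c by simp
qed

lemma arctan_integral: "(\<integral>\<^sup>+u. ennreal (1 / (1 + u\<^sup>2)) \<partial>lborel) = ennreal pi"
proof -
  have "(\<integral>\<^sup>+u. ennreal (1 / (1 + u\<^sup>2)) \<partial>lborel) = 2 * (\<integral>\<^sup>+u. ennreal (1 / (1 + u\<^sup>2)) * indicator {0..} u \<partial>lborel)"
    by (rule nn_integral_even) auto
  also have "(\<integral>\<^sup>+u. ennreal (1 / (1 + u\<^sup>2)) * indicator {0..} u \<partial>lborel) = ennreal (pi / 2 - arctan 0)"
  proof (rule nn_integral_FTC_atLeast)
    show "(arctan \<longlongrightarrow> pi / 2) at_top" by (rule tendsto_arctan_at_top)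
  qed (auto intro!: derivative_eq_intros simp: add_nonneg_eq_0_iff field_simps power2_eq_square)
  also have "2 * ennreal (pi / 2 - arctan 0) = ennreal (2 * (pi / 2))"
    by (subst ennreal_mult) auto
  finally show ?thesis by simp
qed

lemma gauss_double:
  fixes t :: real assumes t: "0 \<le> t"
  shows "(\<integral>\<^sup>+a. \<integral>\<^sup>+b. ennreal (exp (- (a\<^sup>2 + b\<^sup>2)) * indicator {b. t \<le> a\<^sup>2 + b\<^sup>2} b) \<partial>lborel \<partial>lborel)
     = ennreal (pi * exp (- t))"
proof -
  let ?F = "\<lambda>a u. ennreal (\<bar>a\<bar> * exp (- (a\<^sup>2 * (1 + u\<^sup>2))) * indicator {a. t \<le> a\<^sup>2 * (1 + u\<^sup>2)} a)"
  have "(\<integral>\<^sup>+a. \<integral>\<^sup>+b. ennreal (exp (- (a\<^sup>2 + b\<^sup>2)) * indicator {b. t \<le> a\<^sup>2 + b\<^sup>2} b) \<partial>lborel \<partial>lborel)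
      = (\<integral>\<^sup>+a. \<integral>\<^sup>+u. ?F a u \<partial>lborel \<partial>lborel)"
  proof -
    have eq: "(\<integral>\<^sup>+b. ennreal (exp (- (a\<^sup>2 + b\<^sup>2)) * indicator {b. t \<le> a\<^sup>2 + b\<^sup>2} b) \<partial>lborel)
       = (\<integral>\<^sup>+u. ?F a u \<partial>lborel)" if a: "a \<noteq> 0" for a
    proof -
          have "(\<integral>\<^sup>+b. ennreal (exp (- (a\<^sup>2 + b\<^sup>2)) * indicator {b. t \<le> a\<^sup>2 + b\<^sup>2} b) \<partial>lborel)
             = \<bar>a\<bar> * (\<integral>\<^sup>+u. ennreal (exp (- (a\<^sup>2 + (0 + a * u)\<^sup>2)) * indicator {b. t \<le> a\<^sup>2 + b\<^sup>2} (0 + a * u)) \<partial>lborel)"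
            by (rule nn_integral_real_affine) (use a in auto)
          also have "\<dots> = (\<integral>\<^sup>+u. \<bar>a\<bar> * ennreal (exp (- (a\<^sup>2 + (0 + a * u)\<^sup>2)) * indicator {b. t \<le> a\<^sup>2 + b\<^sup>2} (0 + a * u)) \<partial>lborel)"
            by (rule nn_integral_cmult[symmetric]) auto
          also have "\<dots> = (\<integral>\<^sup>+u. ?F a u \<partial>lborel)"
            by (intro nn_integral_cong)
               (auto simp: ennreal_mult[symmetric] power_mult_distrib algebra_simps split: split_indicator)
          finally show ?thesis .
    qed
    show ?thesis
      using AE_lborel_singleton[of 0] eq by (intro nn_integral_cong_AE) (auto elim!: AE_mp)
  qed
  also have "\<dots> = (\<integral>\<^sup>+u. \<integral>\<^sup>+a. ?F a u \<partial>lborel \<partial>lborel)"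
    by (rule lborel_pair.Fubini') auto
  also have "\<dots> = (\<integral>\<^sup>+u. ennreal (exp (- t)) * ennreal (1 / (1 + u\<^sup>2)) \<partial>lborel)"
  proof (intro nn_integral_cong)
    fix u :: real
    have "0 < 1 + u\<^sup>2" by (simp add: add_pos_nonneg)
    from gauss_inner[OF this t] show "(\<integral>\<^sup>+a. ?F a u \<partial>lborel) = ennreal (exp (- t)) * ennreal (1 / (1 + u\<^sup>2))"
      by (simp add: ennreal_mult[symmetric])
  qed
  also have "\<dots> = ennreal (exp (- t)) * ennreal pi"
    by (subst nn_integral_cmult) (auto simp: arctan_integral)
  finally show ?thesis by (simp add: ennreal_mult[symmetric] mult.commute)
qed

abbreviation "gD \<equiv> density lborel (normal_density 0 (sqrt (1/2)))"

lemma gD_prob: "prob_space gD"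
  by (rule prob_space_normal_density) simp

lemma sets_cgauss[simp, measurable_cong]: "sets cgauss = sets borel"
  by (simp add: cgauss_def)

lemma space_cgauss[simp]: "space cgauss = UNIV"
  by (simp add: cgauss_def)

lemma Complex_meas[measurable]: "(\<lambda>(a, b). Complex a b) \<in> borel_measurable (borel \<Otimes>\<^sub>M borel)"
proof -
  have "(\<lambda>(a, b). Complex a b) = (\<lambda>p. complex_of_real (fst p) + \<i> * complex_of_real (snd p))"
    by (auto simp: complex_eq_iff)
  then show ?thesis by simp
qed

lemma prob_space_cgauss: "prob_space cgauss"
proof -
  interpret A: prob_space gD by (rule gD_prob)
  interpret P: pair_prob_space gD gD by unfold_locales
  show ?thesis unfolding cgauss_def
    by (rule P.prob_space_distr) (simp add: measurable_cong_sets[OF sets_pair_measure_cong[OF sets_density sets_density] refl])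
qed

lemma cgauss_tail:
  fixes t :: real assumes t: "0 \<le> t"
  shows "emeasure cgauss {w. t \<le> (cmod w)\<^sup>2} = ennreal (exp (- t))"
proof -
  interpret A: prob_space gD by (rule gD_prob)
  interpret P: pair_sigma_finite gD gD by unfold_locales
  have mC: "(\<lambda>(a, b). Complex a b) \<in> borel_measurable (gD \<Otimes>\<^sub>M gD)"
    by (simp add: measurable_cong_sets[OF sets_pair_measure_cong[OF sets_density sets_density] refl])
  have Sset: "{w. t \<le> (cmod w)\<^sup>2} \<in> sets borel" by measurable
  let ?S = "{p :: real \<times> real. t \<le> (fst p)\<^sup>2 + (snd p)\<^sup>2}"
  have S0': "{p \<in> space (borel \<Otimes>\<^sub>M borel). t \<le> (fst p)\<^sup>2 + (snd p)\<^sup>2} \<in> sets (borel \<Otimes>\<^sub>M borel)" by measurable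
  then have S0: "?S \<in> sets (borel \<Otimes>\<^sub>M borel)" by (simp add: space_pair_measure)
  have S: "?S \<in> sets (gD \<Otimes>\<^sub>M gD)"
    using S0 by (simp add: sets_pair_measure_cong[OF sets_density sets_density])
  have "emeasure cgauss {w. t \<le> (cmod w)\<^sup>2} = emeasure (gD \<Otimes>\<^sub>M gD) ((\<lambda>(a, b). Complex a b) -` {w. t \<le> (cmod w)\<^sup>2} \<inter> space (gD \<Otimes>\<^sub>M gD))"
    unfolding cgauss_def by (rule emeasure_distr[OF mC Sset])
  also have "(\<lambda>(a, b). Complex a b) -` {w. t \<le> (cmod w)\<^sup>2} \<inter> space (gD \<Otimes>\<^sub>M gD) = ?S"
    by (auto simp: space_pair_measure cmod_def)
  also have "emeasure (gD \<Otimes>\<^sub>M gD) ?S = (\<integral>\<^sup>+a. emeasure gD (Pair a -` ?S) \<partial>gD)"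
    by (rule A.emeasure_pair_measure_alt[OF S])
  also have "\<dots> = (\<integral>\<^sup>+a. normal_density 0 (sqrt (1/2)) a * emeasure gD (Pair a -` ?S) \<partial>lborel)"
    by (subst nn_integral_density) auto
  also have "\<dots> = (\<integral>\<^sup>+a. ennreal (1 / pi) * (\<integral>\<^sup>+b. ennreal (exp (- (a\<^sup>2 + b\<^sup>2)) * indicator {b. t \<le> a\<^sup>2 + b\<^sup>2} b) \<partial>lborel) \<partial>lborel)"
  proof (intro nn_integral_cong)
    fix a :: real
    have "emeasure gD (Pair a -` ?S) = (\<integral>\<^sup>+b. ennreal (normal_density 0 (sqrt (1/2)) b) * indicator {b. t \<le> a\<^sup>2 + b\<^sup>2} b \<partial>lborel)"
      by (subst emeasure_density) (auto intro!: nn_integral_cong split: split_indicator)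
    also have "\<dots> = (\<integral>\<^sup>+b. ennreal (exp (- b\<^sup>2) / sqrt pi) * indicator {b. t \<le> a\<^sup>2 + b\<^sup>2} b \<partial>lborel)"
      by (simp add: normal_density_def)
    finally have e: "emeasure gD (Pair a -` ?S) = \<dots>" .
    have "ennreal (normal_density 0 (sqrt (1/2)) a) * (\<integral>\<^sup>+b. ennreal (exp (- b\<^sup>2) / sqrt pi) * indicator {b. t \<le> a\<^sup>2 + b\<^sup>2} b \<partial>lborel)
      = (\<integral>\<^sup>+b. ennreal (normal_density 0 (sqrt (1/2)) a) * (ennreal (exp (- b\<^sup>2) / sqrt pi) * indicator {b. t \<le> a\<^sup>2 + b\<^sup>2} b) \<partial>lborel)"
      by (rule nn_integral_cmult[symmetric]) auto
    also have "\<dots> = (\<integral>\<^sup>+b. ennreal (1 / pi) * ennreal (exp (- (a\<^sup>2 + b\<^sup>2)) * indicator {b. t \<le> a\<^sup>2 + b\<^sup>2} b) \<partial>lborel)"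
      by (intro nn_integral_cong)
         (auto simp: normal_density_def ennreal_mult[symmetric] exp_add[symmetric] split: split_indicator)
    also have "\<dots> = ennreal (1 / pi) * (\<integral>\<^sup>+b. ennreal (exp (- (a\<^sup>2 + b\<^sup>2)) * indicator {b. t \<le> a\<^sup>2 + b\<^sup>2} b) \<partial>lborel)"
      by (rule nn_integral_cmult) auto
    finally show "ennreal (normal_density 0 (sqrt (1/2)) a) * emeasure gD (Pair a -` ?S) = \<dots>"
      using e by simp
  qed
  also have "\<dots> = ennreal (1 / pi) * ennreal (pi * exp (- t))"
    by (subst nn_integral_cmult) (auto simp del: minus_add_distrib simp: gauss_double[OF t])
  also have "\<dots> = ennreal (exp (- t))"
    by (simp add: ennreal_mult[symmetric])
  finally show ?thesis .
qed

abbreviation "PX \<equiv> PiM (UNIV :: int set) (\<lambda>_. cgauss)"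
abbreviation "Ud dm \<equiv> measure_pmf (pmf_of_set {- int dm .. int dm})"

lemma space_PX[simp]: "space PX = UNIV"
  by (auto simp: space_PiM PiE_def extensional_def)

interpretation cg: prob_space cgauss by (rule prob_space_cgauss)

interpretation PXp: product_prob_space "\<lambda>_::int. cgauss" UNIV
  by (simp add: product_prob_space_def product_prob_space_axioms_def product_sigma_finite_def
      cg.sigma_finite_measure_axioms prob_space_cgauss)

lemma prob_PX: "prob_space PX"
  by (rule prob_space_PiM) (rule prob_space_cgauss)

lemma measure_PX_Collect:
  assumes "finite J" "\<And>i. i \<in> J \<Longrightarrow> A i \<in> sets borel"
  shows "measure PX {x. \<forall>i\<in>J. x i \<in> A i} = (\<Prod>i\<in>J. measure cgauss (A i))"
proof -
  have "emeasure PX {x \<in> space PX. \<forall>i\<in>J. x i \<in> A i} = (\<Prod>i\<in>J. emeasure cgauss (A i))"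
    using assms by (intro PXp.emeasure_PiM_Collect) auto
  then have "emeasure PX {x. \<forall>i\<in>J. x i \<in> A i} = ennreal (\<Prod>i\<in>J. measure cgauss (A i))"
    by (simp add: cg.emeasure_eq_measure prod_ennreal)
  then show ?thesis
    by (subst (asm) PXp.emeasure_eq_measure, subst (asm) ennreal_inj) (auto intro: prod_nonneg)
qed

lemma sets_PX_Collect[measurable]:
  assumes "finite J" "\<And>i. i \<in> J \<Longrightarrow> A i \<in> sets borel"
  shows "{x. \<forall>i\<in>J. x i \<in> A i} \<in> sets PX"
proof -
  have "{x \<in> space PX. \<forall>i\<in>J. x i \<in> A i} \<in> sets PX"
    using assms by measurable
  then show ?thesis by simp
qed

lemma delay_prob: "prob_space (delay_space dm)"
  unfolding delay_space_def
  by (intro prob_space_pair prob_PX) (auto intro!: prob_space_measure_pmf)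

lemma measure_box:
  assumes A: "A \<in> sets PX" and B: "B \<in> sets PX"
  shows "measure (delay_space dm) (A \<times> (B \<times> C)) = measure PX A * measure PX B * measure (Ud dm) C"
proof -
  interpret X: prob_space PX by (rule prob_PX)
  interpret U: prob_space "Ud dm" by (rule prob_space_measure_pmf)
  interpret XU: pair_prob_space PX "Ud dm" by unfold_locales
  interpret XU': prob_space "PX \<Otimes>\<^sub>M Ud dm" by (rule prob_space_pair) unfold_locales
  interpret XXU: pair_prob_space PX "PX \<Otimes>\<^sub>M Ud dm" by unfold_locales
  interpret D: prob_space "delay_space dm" by (rule delay_prob)
  have C: "C \<in> sets (Ud dm)" by simp
  have BC: "emeasure (PX \<Otimes>\<^sub>M Ud dm) (B \<times> C) = emeasure PX B * emeasure (Ud dm) C"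
    by (rule measure_pmf.emeasure_pair_measure_Times[OF B C])
  have "emeasure (delay_space dm) (A \<times> (B \<times> C)) = emeasure PX A * (emeasure PX B * emeasure (Ud dm) C)"
    unfolding delay_space_def
    by (simp add: XU.emeasure_pair_measure_Times BC A B C)
  then have "ennreal (measure (delay_space dm) (A \<times> (B \<times> C))) = ennreal (measure PX A * measure PX B * measure (Ud dm) C)"
    by (simp only: D.emeasure_eq_measure PXp.emeasure_eq_measure measure_pmf.emeasure_eq_measure
        ennreal_mult[symmetric] measure_nonneg mult_nonneg_nonneg mult.assoc)
  then show ?thesis
    by (subst (asm) ennreal_inj) (auto intro: mult_nonneg_nonneg)
qed

lemma measure_Ud_single:
  assumes "d0 \<in> {- int dm .. int dm}"
  shows "measure (Ud dm) {d0} = 1 / (2 * real dm + 1)"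
proof -
  have c: "card {- int dm .. int dm} = 2 * dm + 1" by simp
  show ?thesis using assms
    by (simp add: measure_pmf_single pmf_of_set c)
qed

lemma measure_Ud_out: "measure (Ud dm) (- {- int dm .. int dm}) = 0"
  by (subst measure_pmf_zero_iff) (auto simp: disjnt_def)

lemma cgauss_tail_measure:
  assumes "0 \<le> t" shows "measure cgauss {w. t \<le> (cmod w)\<^sup>2} = exp (- t)"
  using cgauss_tail[OF assms]
  by (simp add: cg.emeasure_eq_measure)

lemma cgauss_low_measure:
  assumes "0 \<le> t" shows "measure cgauss {w. (cmod w)\<^sup>2 < t} = 1 - exp (- t)"
proof -
  have "{w. (cmod w)\<^sup>2 < t} = space cgauss - {w. t \<le> (cmod w)\<^sup>2}" by auto
  moreover have "{w. t \<le> (cmod w)\<^sup>2} \<in> sets cgauss" by simp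
  ultimately show ?thesis using cgauss_tail_measure[OF assms] cg.prob_compl[of "{w. t \<le> (cmod w)\<^sup>2}"] by simp
qed

lemma least_max_props:
  fixes f :: "nat \<Rightarrow> real" and N :: nat
  shows "(LEAST n. n \<le> N \<and> (\<forall>m\<le>N. f m \<le> f n)) \<le> N \<and>
         (\<forall>m\<le>N. f m \<le> f (LEAST n. n \<le> N \<and> (\<forall>m\<le>N. f m \<le> f n)))"
proof -
  define M where "M = Max (f ` {..N})"
  have "M \<in> f ` {..N}" unfolding M_def by (intro Max_in) auto
  then obtain n where n: "n \<le> N" "f n = M" by auto
  have "\<forall>m\<le>N. f m \<le> f n" using n by (auto simp: M_def)
  with n have ex: "\<exists>n. n \<le> N \<and> (\<forall>m\<le>N. f m \<le> f n)" by blast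
  show ?thesis by (rule LeastI_ex[OF ex])
qed

lemma J_props:
  assumes N: "0 < N"
  shows "mmie_J x N \<in> {0..<int N}" "\<And>m. m < N \<Longrightarrow> (cmod (x (int m)))\<^sup>2 \<le> (cmod (x (mmie_J x N)))\<^sup>2"
proof -
  have eq: "(\<lambda>n. n < N \<and> (\<forall>m<N. (cmod (x (int m)))\<^sup>2 \<le> (cmod (x (int n)))\<^sup>2)) =
            (\<lambda>n. n \<le> N - 1 \<and> (\<forall>m\<le>N - 1. (cmod (x (int m)))\<^sup>2 \<le> (cmod (x (int n)))\<^sup>2))"
    using N by (auto simp: fun_eq_iff less_Suc_eq_le)
  note L = least_max_props[where f="\<lambda>n. (cmod (x (int n)))\<^sup>2" and N="N - 1"]
  show "mmie_J x N \<in> {0..<int N}" using L N unfolding mmie_J_def eq by auto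
  show "m < N \<Longrightarrow> (cmod (x (int m)))\<^sup>2 \<le> (cmod (x (mmie_J x N)))\<^sup>2" for m
    using L N unfolding mmie_J_def eq by auto
qed

lemma dhat_props:
  fixes y :: "int \<Rightarrow> complex"
  shows "mmie_dhat y J dm \<in> {- int dm .. int dm}"
    "\<And>l. l \<in> {- int dm .. int dm} \<Longrightarrow> (cmod (y (J + l)))\<^sup>2 \<le> (cmod (y (J + mmie_dhat y J dm)))\<^sup>2"
proof -
  define i0 where "i0 = (LEAST i::nat. i \<le> 2 * dm \<and>
            (\<forall>j\<le>2 * dm. (cmod (y (J + int j - int dm)))\<^sup>2 \<le> (cmod (y (J + int i - int dm)))\<^sup>2))"
  note L = least_max_props[where f="\<lambda>i. (cmod (y (J + int i - int dm)))\<^sup>2" and N="2 * dm", folded i0_def]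
  have dh: "mmie_dhat y J dm = int i0 - int dm" unfolding mmie_dhat_def i0_def by simp
  show "mmie_dhat y J dm \<in> {- int dm .. int dm}" using L dh by auto
  show "(cmod (y (J + l)))\<^sup>2 \<le> (cmod (y (J + mmie_dhat y J dm)))\<^sup>2" if l: "l \<in> {- int dm .. int dm}" for l
  proof -
    have "nat (l + int dm) \<le> 2 * dm" using l by auto
    with L have "(cmod (y (J + int (nat (l + int dm)) - int dm)))\<^sup>2 \<le> (cmod (y (J + int i0 - int dm)))\<^sup>2" by blast
    moreover have "J + int (nat (l + int dm)) - int dm = J + l" using l by auto
    ultimately show ?thesis by (simp add: dh algebra_simps)
  qed
qed

lemma error_cover:
  fixes \<rho> :: complex and x z :: "int \<Rightarrow> complex"
  defines "b \<equiv> sqrt (1 - (cmod \<rho>)\<^sup>2)"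
  assumes a1: "cmod \<rho> \<le> 1" and tau: "0 \<le> \<tau>" and v: "0 \<le> v"
    and cover: "\<And>u w. v \<le> (cmod (\<rho> * u + complex_of_real b * w))\<^sup>2 \<Longrightarrow> \<exists>i<K. tx i \<le> (cmod u)\<^sup>2 \<and> tz i \<le> (cmod w)\<^sup>2"
    and err: "mmie_dhat (rx_signal \<rho> x z d) (mmie_J x (2^k)) dm \<noteq> d"
    and dD: "d \<in> {- int dm .. int dm}"
  shows "(\<forall>j\<in>{0..<int (2^k)}. (cmod (x j))\<^sup>2 < \<tau>) \<or>
         (\<exists>j\<in>{0..<int (2^k)}. \<tau> \<le> (cmod (x j))\<^sup>2 \<and>
            (cmod \<rho> * sqrt \<tau> - sqrt v < b * cmod (z (j + d)) \<or>
             (\<exists>l\<in>{- int dm .. int dm} - {d}. \<exists>i<K. tx i \<le> (cmod (x (j + l - d)))\<^sup>2 \<and> tz i \<le> (cmod (z (j + l)))\<^sup>2)))"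
proof -
  define J where "J = mmie_J x (2^k)"
  define Y where "Y = rx_signal \<rho> x z d"
  define l where "l = mmie_dhat Y J dm"
  have N: "(0::nat) < 2^k" by simp
  have J: "J \<in> {0..<int (2^k)}" using J_props(1)[OF N] by (simp add: J_def)
  have Jmax: "\<And>m. m < 2^k \<Longrightarrow> (cmod (x (int m)))\<^sup>2 \<le> (cmod (x J))\<^sup>2"
    using J_props(2)[OF N] by (simp add: J_def)
  have lD: "l \<in> {- int dm .. int dm}" using dhat_props(1) by (simp add: l_def)
  have ld: "l \<noteq> d" using err by (simp add: l_def Y_def J_def)
  have YY: "(cmod (Y (J + d)))\<^sup>2 \<le> (cmod (Y (J + l)))\<^sup>2"
    using dhat_props(2)[OF dD] by (simp add: l_def)
  have b0: "0 \<le> b" unfolding b_def using a1 by (simp add: power_le_one)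
  show ?thesis
  proof (cases "(cmod (x J))\<^sup>2 < \<tau>")
    case True
    have "\<forall>j\<in>{0..<int (2^k)}. (cmod (x j))\<^sup>2 < \<tau>"
    proof
      fix j assume j: "j \<in> {0..<int (2^k)}"
      then obtain m where m: "j = int m" "m < 2^k" by (metis atLeastLessThan_iff nonneg_int_cases of_nat_less_iff)
      show "(cmod (x j))\<^sup>2 < \<tau>" using Jmax[OF m(2)] True unfolding m(1) by linarith
    qed
    then show ?thesis by blast
  next
    case False
    then have tJ: "\<tau> \<le> (cmod (x J))\<^sup>2" by simp
    have "cmod \<rho> * sqrt \<tau> - sqrt v < b * cmod (z (J + d)) \<or>
          (\<exists>l\<in>{- int dm .. int dm} - {d}. \<exists>i<K. tx i \<le> (cmod (x (J + l - d)))\<^sup>2 \<and> tz i \<le> (cmod (z (J + l)))\<^sup>2)"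
    proof (cases "(cmod (Y (J + d)))\<^sup>2 < v")
      case True
      have Yd: "Y (J + d) = \<rho> * x J + complex_of_real b * z (J + d)"
        by (simp add: Y_def rx_signal_def b_def)
      have "sqrt \<tau> \<le> cmod (x J)" using tJ by (metis norm_ge_zero real_sqrt_abs real_sqrt_le_mono abs_of_nonneg)
      then have "cmod \<rho> * sqrt \<tau> \<le> cmod (\<rho> * x J)" by (simp add: norm_mult mult_left_mono)
      also have "\<dots> \<le> cmod (Y (J + d)) + cmod (complex_of_real b * z (J + d))"
        using norm_triangle_ineq4[of "Y (J + d)" "complex_of_real b * z (J + d)"] Yd by simp
      also have "cmod (complex_of_real b * z (J + d)) = b * cmod (z (J + d))"
        using b0 by (simp add: norm_mult)
      also have "cmod (Y (J + d)) < sqrt v"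
        using True by (metis norm_ge_zero real_sqrt_abs real_sqrt_less_mono abs_of_nonneg)
      finally show ?thesis by simp
    next
      case False
      then have "v \<le> (cmod (Y (J + l)))\<^sup>2" using YY by linarith
      moreover have "Y (J + l) = \<rho> * x (J + l - d) + complex_of_real b * z (J + l)"
        by (simp add: Y_def rx_signal_def b_def)
      ultimately obtain i where "i < K" "tx i \<le> (cmod (x (J + l - d)))\<^sup>2" "tz i \<le> (cmod (z (J + l)))\<^sup>2"
        using cover by metis
      then show ?thesis using lD ld by blast
    qed
    then show ?thesis using J tJ by blast
  qed
qed

lemma error_event_sets: "mmie_error_event \<rho> dm k \<in> sets (delay_space dm)"
proof -
  let ?M = "delay_space dm"
  let ?b = "complex_of_real (sqrt (1 - (cmod \<rho>)\<^sup>2))"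
  have sp: "space ?M = UNIV" by (simp add: delay_space_def space_pair_measure)
  have X[measurable]: "(\<lambda>\<omega>. fst \<omega> i) \<in> borel_measurable ?M" for i
    unfolding delay_space_def by measurable
  have Z[measurable]: "(\<lambda>\<omega>. fst (snd \<omega>) i) \<in> borel_measurable ?M" for i
    unfolding delay_space_def by measurable
  have Dm[measurable]: "(\<lambda>\<omega>. snd (snd \<omega>)) \<in> measurable ?M (count_space UNIV)"
    unfolding delay_space_def by measurable
  have Jm[measurable]: "(\<lambda>\<omega>. mmie_J (fst \<omega>) (2^k)) \<in> measurable ?M (count_space UNIV)"
  proof -
    have pr: "Measurable.pred ?M (\<lambda>\<omega>. n < 2^k \<and> (\<forall>m\<in>{..<(2::nat)^k}. (cmod (fst \<omega> (int m)))\<^sup>2 \<le> (cmod (fst \<omega> (int n)))\<^sup>2))" for n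
      by (intro pred_intros_finite pred_intros_logic) measurable
    have L: "(\<lambda>\<omega>. LEAST n. n < 2^k \<and> (\<forall>m\<in>{..<(2::nat)^k}. (cmod (fst \<omega> (int m)))\<^sup>2 \<le> (cmod (fst \<omega> (int n)))\<^sup>2)) \<in> measurable ?M (count_space UNIV)"
      by (rule measurable_Least) (use pr in \<open>simp add: pred_def\<close>)
    show ?thesis unfolding mmie_J_def using L by (simp add: lessThan_def)
  qed
  have Xr[measurable]: "(\<lambda>\<omega>. fst \<omega> (n - snd (snd \<omega>))) \<in> borel_measurable ?M" for n
    by (rule measurable_compose_countable[where f="\<lambda>i \<omega>. fst \<omega> (n - i)", OF _ Dm]) measurable
  have Y[measurable]: "(\<lambda>\<omega>. rx_signal \<rho> (fst \<omega>) (fst (snd \<omega>)) (snd (snd \<omega>)) n) \<in> borel_measurable ?M" for n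
  proof -
    have "(\<lambda>\<omega>. \<rho> * fst \<omega> (n - snd (snd \<omega>)) + ?b * fst (snd \<omega>) n) \<in> borel_measurable ?M"
      by (intro borel_measurable_add borel_measurable_times measurable_const Xr Z) auto
    then show ?thesis by (simp add: rx_signal_def)
  qed
  have YJ[measurable]: "(\<lambda>\<omega>. rx_signal \<rho> (fst \<omega>) (fst (snd \<omega>)) (snd (snd \<omega>)) (mmie_J (fst \<omega>) (2^k) + c)) \<in> borel_measurable ?M" for c
    by (rule measurable_compose_countable[where f="\<lambda>i \<omega>. rx_signal \<rho> (fst \<omega>) (fst (snd \<omega>)) (snd (snd \<omega>)) (i + c)", OF _ Jm]) measurable
  have dh: "(\<lambda>\<omega>. mmie_dhat (rx_signal \<rho> (fst \<omega>) (fst (snd \<omega>)) (snd (snd \<omega>))) (mmie_J (fst \<omega>) (2^k)) dm) \<in> measurable ?M (count_space UNIV)"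
  proof -
    let ?y = "\<lambda>\<omega> c. (cmod (rx_signal \<rho> (fst \<omega>) (fst (snd \<omega>)) (snd (snd \<omega>)) (mmie_J (fst \<omega>) (2^k) + c)))\<^sup>2"
    have yc: "(\<lambda>\<omega>. ?y \<omega> c) \<in> borel_measurable ?M" for c
      using YJ[of c] by measurable
    have pr: "Measurable.pred ?M (\<lambda>\<omega>. i \<le> 2 * dm \<and> (\<forall>j\<in>{..2 * dm}. ?y \<omega> (int j - int dm) \<le> ?y \<omega> (int i - int dm)))" for i
      by (intro pred_intros_finite pred_intros_logic borel_measurable_le yc) auto
    have L: "(\<lambda>\<omega>. LEAST i. i \<le> 2 * dm \<and> (\<forall>j\<in>{..2 * dm}. ?y \<omega> (int j - int dm) \<le> ?y \<omega> (int i - int dm))) \<in> measurable ?M (count_space UNIV)"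
      by (rule measurable_Least) (use pr in \<open>simp add: pred_def\<close>)
    have eq: "(\<lambda>\<omega>. mmie_dhat (rx_signal \<rho> (fst \<omega>) (fst (snd \<omega>)) (snd (snd \<omega>))) (mmie_J (fst \<omega>) (2^k)) dm)
      = (\<lambda>\<omega>. int (LEAST i. i \<le> 2 * dm \<and> (\<forall>j\<in>{..2 * dm}. ?y \<omega> (int j - int dm) \<le> ?y \<omega> (int i - int dm))) - int dm)"
      by (simp add: mmie_dhat_def atMost_def add_diff_eq)
    show ?thesis unfolding eq
      by (rule measurable_compose[OF L]) (rule measurable_count_space)
  qed
  have P: "Measurable.pred ?M (\<lambda>\<omega>. mmie_dhat (rx_signal \<rho> (fst \<omega>) (fst (snd \<omega>)) (snd (snd \<omega>))) (mmie_J (fst \<omega>) (2^k)) dm \<noteq> snd (snd \<omega>))"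
    by (rule measurable_compose_countable[where f="\<lambda>i \<omega>. i \<noteq> snd (snd \<omega>)", OF _ dh]) measurable
  have "mmie_error_event \<rho> dm k = {\<omega> \<in> space ?M. mmie_dhat (rx_signal \<rho> (fst \<omega>) (fst (snd \<omega>)) (snd (snd \<omega>))) (mmie_J (fst \<omega>) (2^k)) dm \<noteq> snd (snd \<omega>)}"
    by (auto simp: mmie_error_event_def)
  also have "\<dots> \<in> sets ?M" using P by (simp add: pred_def)
  finally show ?thesis .
qed

lemma sets_PX1: "A \<in> sets borel \<Longrightarrow> {x. x j \<in> A} \<in> sets PX"
  using sets_PX_Collect[of "{j}" "\<lambda>_. A"] by simp

lemma measure_PX1: "A \<in> sets borel \<Longrightarrow> measure PX {x. x j \<in> A} = measure cgauss A"
  using measure_PX_Collect[of "{j}" "\<lambda>_. A"] by simp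

lemma sets_PX2: "A \<in> sets borel \<Longrightarrow> B \<in> sets borel \<Longrightarrow> {x. x j \<in> A \<and> x m \<in> B} \<in> sets PX"
proof (cases "j = m")
  case True
  assume "A \<in> sets borel" "B \<in> sets borel"
  then have "{x. x m \<in> A \<inter> B} \<in> sets PX" by (intro sets_PX1) auto
  moreover have "{x. x j \<in> A \<and> x m \<in> B} = {x. x m \<in> A \<inter> B}" using True by auto
  ultimately show ?thesis by simp
next
  case False
  assume "A \<in> sets borel" "B \<in> sets borel"
  then show ?thesis using False sets_PX_Collect[of "{j, m}" "\<lambda>i. if i = j then A else B"] by auto
qed

lemma measure_PX2:
  assumes "j \<noteq> m" "A \<in> sets borel" "B \<in> sets borel"
  shows "measure PX {x. x j \<in> A \<and> x m \<in> B} = measure cgauss A * measure cgauss B"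
proof -
  have "measure PX {x. \<forall>i\<in>{j, m}. x i \<in> (if i = j then A else B)} = (\<Prod>i\<in>{j, m}. measure cgauss (if i = j then A else B))"
    using assms by (intro measure_PX_Collect) auto
  moreover have "{x. \<forall>i\<in>{j, m}. x i \<in> (if i = j then A else B)} = {x. x j \<in> A \<and> x m \<in> B}"
    using assms by auto
  ultimately show ?thesis using assms by simp
qed

lemma UNIV_PX[simp]: "UNIV \<in> sets PX"
  using sets.top[of PX] by simp

lemma sets_delay_box: "A \<in> sets PX \<Longrightarrow> B \<in> sets PX \<Longrightarrow> A \<times> (B \<times> C) \<in> sets (delay_space dm)"
  unfolding delay_space_def by (intro pair_measureI) auto

lemma main_bound:
  fixes \<rho> :: complex and dm k :: nat and \<tau> v :: real and K :: nat and tx tz :: "nat \<Rightarrow> real"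
  defines "b \<equiv> sqrt (1 - (cmod \<rho>)\<^sup>2)"
  assumes a1: "cmod \<rho> \<le> 1" and tau: "0 \<le> \<tau>" and v: "0 \<le> v"
    and tx: "\<And>i. 0 \<le> tx i" and tz: "\<And>i. 0 \<le> tz i"
    and cover: "\<And>u w. v \<le> (cmod (\<rho> * u + complex_of_real b * w))\<^sup>2 \<Longrightarrow> \<exists>i<K. tx i \<le> (cmod u)\<^sup>2 \<and> tz i \<le> (cmod w)\<^sup>2"
  shows "mmie_perr \<rho> dm k \<le> (1 - exp (- \<tau>)) ^ (2^k) + 2^k * exp (- \<tau>) *
           (measure cgauss {w. cmod \<rho> * sqrt \<tau> - sqrt v < b * cmod w} + 2 * dm * (\<Sum>i<K. exp (- tx i) * exp (- tz i)))"
proof -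
  let ?M = "delay_space dm"
  interpret D: prob_space ?M by (rule delay_prob)
  define N :: nat where "N = 2^k"
  define Dl where "Dl = {- int dm .. int dm}"
  define JJ where "JJ = {0..<int N}"
  define r where "r = cmod \<rho> * sqrt \<tau> - sqrt v"
  define q1 where "q1 = measure cgauss {w. r < b * cmod w}"
  define c where "c = 1 / (2 * real dm + 1)"
  define B2 where "B2 = (\<Sum>i<K. exp (- tx i) * exp (- tz i))"
  define S0 :: "((int \<Rightarrow> complex) \<times> (int \<Rightarrow> complex) \<times> int) set"
    where "S0 = {x. \<forall>j\<in>JJ. x j \<in> {w. (cmod w)\<^sup>2 < \<tau>}} \<times> (UNIV \<times> UNIV)"
  define Sout :: "((int \<Rightarrow> complex) \<times> (int \<Rightarrow> complex) \<times> int) set"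
    where "Sout = UNIV \<times> (UNIV \<times> (- Dl))"
  define S1 :: "int \<Rightarrow> int \<Rightarrow> ((int \<Rightarrow> complex) \<times> (int \<Rightarrow> complex) \<times> int) set"
    where "S1 j d0 = {x. x j \<in> {w. \<tau> \<le> (cmod w)\<^sup>2}} \<times> ({z. z (j + d0) \<in> {w. r < b * cmod w}} \<times> {d0})" for j d0
  define S2 :: "int \<Rightarrow> int \<Rightarrow> int \<Rightarrow> nat \<Rightarrow> ((int \<Rightarrow> complex) \<times> (int \<Rightarrow> complex) \<times> int) set"
    where "S2 j d0 l i = {x. x j \<in> {w. \<tau> \<le> (cmod w)\<^sup>2} \<and> x (j + l - d0) \<in> {w. tx i \<le> (cmod w)\<^sup>2}}
       \<times> ({z. z (j + l) \<in> {w. tz i \<le> (cmod w)\<^sup>2}} \<times> {d0})" for j d0 l i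
  define W where "W = S0 \<union> Sout \<union> (\<Union>d0\<in>Dl. \<Union>j\<in>JJ. S1 j d0 \<union> (\<Union>l\<in>Dl - {d0}. \<Union>i\<in>{..<K}. S2 j d0 l i))"
  have bor1: "{w. (cmod w)\<^sup>2 < \<tau>} \<in> sets borel" "{w. \<tau> \<le> (cmod w)\<^sup>2} \<in> sets borel"
    "{w. r < b * cmod w} \<in> sets borel" "\<And>t. {w. t \<le> (cmod w)\<^sup>2} \<in> sets borel"
    by (intro borel_closed closed_Collect_le borel_open open_Collect_less; auto intro!: continuous_intros)+
  have fin: "finite JJ" "finite Dl" by (auto simp: JJ_def Dl_def)
  have mS0: "S0 \<in> sets ?M" unfolding S0_def
    by (intro sets_delay_box sets_PX_Collect) (use fin bor1 in auto)
  have mSout: "Sout \<in> sets ?M" unfolding Sout_def by (intro sets_delay_box) auto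
  have mS1: "S1 j d0 \<in> sets ?M" for j d0 unfolding S1_def
    by (intro sets_delay_box sets_PX1 bor1)
  have mS2: "S2 j d0 l i \<in> sets ?M" for j d0 l i unfolding S2_def
    by (intro sets_delay_box sets_PX1 sets_PX2 bor1)
  have mW: "W \<in> sets ?M" unfolding W_def
    using mS0 mSout mS1 mS2 fin by (intro sets.Un sets.finite_UN) auto
  have sub: "mmie_error_event \<rho> dm k \<subseteq> W"
  proof
    fix \<omega> assume e: "\<omega> \<in> mmie_error_event \<rho> dm k"
    obtain x z d where \<omega>: "\<omega> = (x, z, d)" by (cases \<omega>) auto
    have err: "mmie_dhat (rx_signal \<rho> x z d) (mmie_J x (2^k)) dm \<noteq> d"
      using e by (simp add: mmie_error_event_def \<omega>)
    show "\<omega> \<in> W"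
    proof (cases "d \<in> Dl")
      case False then show ?thesis by (simp add: W_def Sout_def \<omega>)
    next
      case True
      note C = error_cover[OF a1 tau v cover[unfolded b_def] err True[unfolded Dl_def]]
      show ?thesis using C
      proof
        assume "\<forall>j\<in>{0..<int (2^k)}. (cmod (x j))\<^sup>2 < \<tau>"
        then show ?thesis by (simp add: W_def S0_def \<omega> JJ_def N_def)
      next
        assume "\<exists>j\<in>{0..<int (2^k)}. \<tau> \<le> (cmod (x j))\<^sup>2 \<and>
            (cmod \<rho> * sqrt \<tau> - sqrt v < sqrt (1 - (cmod \<rho>)\<^sup>2) * cmod (z (j + d)) \<or>
             (\<exists>l\<in>{- int dm .. int dm} - {d}. \<exists>i<K. tx i \<le> (cmod (x (j + l - d)))\<^sup>2 \<and> tz i \<le> (cmod (z (j + l)))\<^sup>2))"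
        then have "\<exists>j\<in>JJ. \<tau> \<le> (cmod (x j))\<^sup>2 \<and> (r < b * cmod (z (j + d)) \<or>
             (\<exists>l\<in>Dl - {d}. \<exists>i<K. tx i \<le> (cmod (x (j + l - d)))\<^sup>2 \<and> tz i \<le> (cmod (z (j + l)))\<^sup>2))"
          by (simp only: JJ_def N_def r_def b_def Dl_def)
        then obtain j where j: "j \<in> JJ" "\<tau> \<le> (cmod (x j))\<^sup>2"
          and alt: "r < b * cmod (z (j + d)) \<or>
             (\<exists>l\<in>Dl - {d}. \<exists>i<K. tx i \<le> (cmod (x (j + l - d)))\<^sup>2 \<and> tz i \<le> (cmod (z (j + l)))\<^sup>2)"
          by blast
        from alt show ?thesis
        proof
          assume "r < b * cmod (z (j + d))"
          then have "\<omega> \<in> S1 j d" using j by (simp add: S1_def \<omega>)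
          then show ?thesis using j True unfolding W_def by blast
        next
          assume "\<exists>l\<in>Dl - {d}. \<exists>i<K. tx i \<le> (cmod (x (j + l - d)))\<^sup>2 \<and> tz i \<le> (cmod (z (j + l)))\<^sup>2"
          then obtain l i where li: "l \<in> Dl - {d}" "i < K" "tx i \<le> (cmod (x (j + l - d)))\<^sup>2" "tz i \<le> (cmod (z (j + l)))\<^sup>2"
            by blast
          then have "\<omega> \<in> S2 j d l i" using j by (simp add: S2_def \<omega>)
          then show ?thesis using j True li unfolding W_def by blast
        qed
      qed
    qed
  qed
  have mPX1: "measure PX UNIV = 1" using prob_space.prob_space[OF prob_PX] by simp
  have mU1: "measure (Ud dm) UNIV = 1" using measure_pmf.prob_space[of "pmf_of_set Dl"] by simp
  have PS0: "measure ?M S0 = (1 - exp (- \<tau>)) ^ N"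
  proof -
    have "measure PX {x. \<forall>j\<in>JJ. x j \<in> {w. (cmod w)\<^sup>2 < \<tau>}} = (\<Prod>j\<in>JJ. measure cgauss {w. (cmod w)\<^sup>2 < \<tau>})"
      using fin bor1 by (intro measure_PX_Collect) auto
    also have "\<dots> = (1 - exp (- \<tau>)) ^ N" using tau by (simp add: cgauss_low_measure JJ_def)
    finally have e: "measure PX {x. \<forall>j\<in>JJ. x j \<in> {w. (cmod w)\<^sup>2 < \<tau>}} = (1 - exp (- \<tau>)) ^ N" .
    have m: "{x. \<forall>j\<in>JJ. x j \<in> {w. (cmod w)\<^sup>2 < \<tau>}} \<in> sets PX"
      by (rule sets_PX_Collect) (use fin bor1 in auto)
    show ?thesis unfolding S0_def measure_box[OF m UNIV_PX] e by (simp add: mPX1 mU1)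
  qed
  have PSout: "measure ?M Sout = 0"
    unfolding Sout_def Dl_def measure_box[OF UNIV_PX UNIV_PX] by (simp add: measure_Ud_out)
  have PS1: "measure ?M (S1 j d0) = exp (- \<tau>) * q1 * c" if "d0 \<in> Dl" for j d0
  proof -
    have A: "{x. x j \<in> {w. \<tau> \<le> (cmod w)\<^sup>2}} \<in> sets PX" by (rule sets_PX1[OF bor1(2)])
    have B: "{z. z (j + d0) \<in> {w. r < b * cmod w}} \<in> sets PX" by (rule sets_PX1[OF bor1(3)])
    show ?thesis
      unfolding S1_def measure_box[OF A B] measure_PX1[OF bor1(2)] measure_PX1[OF bor1(3)] cgauss_tail_measure[OF tau]
      using that by (simp add: q1_def c_def Dl_def measure_Ud_single)
  qed
  have PS2: "measure ?M (S2 j d0 l i) = exp (- \<tau>) * exp (- tx i) * exp (- tz i) * c" if "d0 \<in> Dl" "l \<noteq> d0" for j d0 l i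
  proof -
    have ne: "j \<noteq> j + l - d0" using that by simp
    have A: "{x. x j \<in> {w. \<tau> \<le> (cmod w)\<^sup>2} \<and> x (j + l - d0) \<in> {w. tx i \<le> (cmod w)\<^sup>2}} \<in> sets PX"
      by (rule sets_PX2[OF bor1(2) bor1(4)])
    have B: "{z. z (j + l) \<in> {w. tz i \<le> (cmod w)\<^sup>2}} \<in> sets PX" by (rule sets_PX1[OF bor1(4)])
    show ?thesis
      unfolding S2_def measure_box[OF A B] measure_PX2[OF ne bor1(2) bor1(4)] measure_PX1[OF bor1(4)]
        cgauss_tail_measure[OF tau] cgauss_tail_measure[OF tx] cgauss_tail_measure[OF tz]
      using that by (simp add: c_def Dl_def measure_Ud_single)
  qed
  have "mmie_perr \<rho> dm k \<le> measure ?M W"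
    unfolding mmie_perr_def by (rule D.finite_measure_mono[OF sub mW])
  also have "measure ?M W \<le> measure ?M S0 + measure ?M Sout +
      (\<Sum>d0\<in>Dl. \<Sum>j\<in>JJ. measure ?M (S1 j d0) + (\<Sum>l\<in>Dl - {d0}. \<Sum>i\<in>{..<K}. measure ?M (S2 j d0 l i)))"
  proof -
    have U1: "measure ?M (\<Union>d0\<in>Dl. \<Union>j\<in>JJ. S1 j d0 \<union> (\<Union>l\<in>Dl - {d0}. \<Union>i\<in>{..<K}. S2 j d0 l i))
       \<le> (\<Sum>d0\<in>Dl. \<Sum>j\<in>JJ. measure ?M (S1 j d0) + (\<Sum>l\<in>Dl - {d0}. \<Sum>i\<in>{..<K}. measure ?M (S2 j d0 l i)))"
    proof -
      have "measure ?M (\<Union>d0\<in>Dl. \<Union>j\<in>JJ. S1 j d0 \<union> (\<Union>l\<in>Dl - {d0}. \<Union>i\<in>{..<K}. S2 j d0 l i))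
         \<le> (\<Sum>d0\<in>Dl. measure ?M (\<Union>j\<in>JJ. S1 j d0 \<union> (\<Union>l\<in>Dl - {d0}. \<Union>i\<in>{..<K}. S2 j d0 l i)))"
        using fin mS1 mS2 by (intro measure_UNION_le) auto
      also have "\<dots> \<le> (\<Sum>d0\<in>Dl. \<Sum>j\<in>JJ. measure ?M (S1 j d0) + (\<Sum>l\<in>Dl - {d0}. \<Sum>i\<in>{..<K}. measure ?M (S2 j d0 l i)))"
      proof (intro sum_mono)
        fix d0
        have "measure ?M (\<Union>j\<in>JJ. S1 j d0 \<union> (\<Union>l\<in>Dl - {d0}. \<Union>i\<in>{..<K}. S2 j d0 l i))
           \<le> (\<Sum>j\<in>JJ. measure ?M (S1 j d0 \<union> (\<Union>l\<in>Dl - {d0}. \<Union>i\<in>{..<K}. S2 j d0 l i)))"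
          using fin mS1 mS2 by (intro measure_UNION_le) auto
        also have "\<dots> \<le> (\<Sum>j\<in>JJ. measure ?M (S1 j d0) + (\<Sum>l\<in>Dl - {d0}. \<Sum>i\<in>{..<K}. measure ?M (S2 j d0 l i)))"
        proof (intro sum_mono)
          fix j
          have "measure ?M (S1 j d0 \<union> (\<Union>l\<in>Dl - {d0}. \<Union>i\<in>{..<K}. S2 j d0 l i))
             \<le> measure ?M (S1 j d0) + measure ?M (\<Union>l\<in>Dl - {d0}. \<Union>i\<in>{..<K}. S2 j d0 l i)"
            using fin mS1 mS2 by (intro measure_Un_le) auto
          also have "measure ?M (\<Union>l\<in>Dl - {d0}. \<Union>i\<in>{..<K}. S2 j d0 l i)
             \<le> (\<Sum>l\<in>Dl - {d0}. measure ?M (\<Union>i\<in>{..<K}. S2 j d0 l i))"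
            using fin mS2 by (intro measure_UNION_le) auto
          also have "\<dots> \<le> (\<Sum>l\<in>Dl - {d0}. \<Sum>i\<in>{..<K}. measure ?M (S2 j d0 l i))"
            using mS2 by (intro sum_mono measure_UNION_le) auto
          finally show "measure ?M (S1 j d0 \<union> (\<Union>l\<in>Dl - {d0}. \<Union>i\<in>{..<K}. S2 j d0 l i))
             \<le> measure ?M (S1 j d0) + (\<Sum>l\<in>Dl - {d0}. \<Sum>i\<in>{..<K}. measure ?M (S2 j d0 l i))" by simp
        qed
        finally show "measure ?M (\<Union>j\<in>JJ. S1 j d0 \<union> (\<Union>l\<in>Dl - {d0}. \<Union>i\<in>{..<K}. S2 j d0 l i))
           \<le> (\<Sum>j\<in>JJ. measure ?M (S1 j d0) + (\<Sum>l\<in>Dl - {d0}. \<Sum>i\<in>{..<K}. measure ?M (S2 j d0 l i)))" .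
      qed
      finally show ?thesis .
    qed
    have mU: "(\<Union>d0\<in>Dl. \<Union>j\<in>JJ. S1 j d0 \<union> (\<Union>l\<in>Dl - {d0}. \<Union>i\<in>{..<K}. S2 j d0 l i)) \<in> sets ?M"
      using mS1 mS2 fin by (intro sets.finite_UN sets.Un) auto
    have "measure ?M W \<le> measure ?M (S0 \<union> Sout) + measure ?M (\<Union>d0\<in>Dl. \<Union>j\<in>JJ. S1 j d0 \<union> (\<Union>l\<in>Dl - {d0}. \<Union>i\<in>{..<K}. S2 j d0 l i))"
      unfolding W_def using mS0 mSout mU by (intro measure_Un_le) auto
    also have "measure ?M (S0 \<union> Sout) \<le> measure ?M S0 + measure ?M Sout"
      using mS0 mSout by (rule measure_Un_le)
    finally show ?thesis using U1 by simp
  qed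
  also have "(\<Sum>d0\<in>Dl. \<Sum>j\<in>JJ. measure ?M (S1 j d0) + (\<Sum>l\<in>Dl - {d0}. \<Sum>i\<in>{..<K}. measure ?M (S2 j d0 l i)))
      = (\<Sum>d0\<in>Dl. \<Sum>j\<in>JJ. exp (- \<tau>) * q1 * c + (\<Sum>l\<in>Dl - {d0}. \<Sum>i\<in>{..<K}. exp (- \<tau>) * exp (- tx i) * exp (- tz i) * c))"
    using PS1 PS2 by (intro sum.cong refl) auto
  also have "\<dots> = N * exp (- \<tau>) * (q1 + 2 * dm * B2)"
  proof -
    have cD: "card Dl = 2 * dm + 1" by (simp add: Dl_def)
    have cJ: "card JJ = N" by (simp add: JJ_def)
    have cD1: "card (Dl - {d0}) = 2 * dm" if "d0 \<in> Dl" for d0 using that cD fin by (simp add: card_Diff_singleton)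
    have inner: "(\<Sum>l\<in>Dl - {d0}. \<Sum>i\<in>{..<K}. exp (- \<tau>) * exp (- tx i) * exp (- tz i) * c) = 2 * dm * (exp (- \<tau>) * B2 * c)"
      if "d0 \<in> Dl" for d0
    proof -
      have "(\<Sum>i\<in>{..<K}. exp (- \<tau>) * exp (- tx i) * exp (- tz i) * c) = exp (- \<tau>) * B2 * c"
        by (simp add: B2_def sum_distrib_left sum_distrib_right mult.assoc)
      then show ?thesis using cD1[OF that] by simp
    qed
    have "(\<Sum>d0\<in>Dl. \<Sum>j\<in>JJ. exp (- \<tau>) * q1 * c + (\<Sum>l\<in>Dl - {d0}. \<Sum>i\<in>{..<K}. exp (- \<tau>) * exp (- tx i) * exp (- tz i) * c))
       = (\<Sum>d0\<in>Dl. \<Sum>j\<in>JJ. exp (- \<tau>) * q1 * c + 2 * dm * (exp (- \<tau>) * B2 * c))"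
      using inner by (intro sum.cong refl) auto
    also have "\<dots> = (2 * dm + 1) * (N * (exp (- \<tau>) * q1 * c + 2 * dm * (exp (- \<tau>) * B2 * c)))"
      by (simp add: cD cJ)
    also have "\<dots> = N * exp (- \<tau>) * (q1 + 2 * dm * B2) * ((2 * real dm + 1) * c)"
      by (simp add: algebra_simps)
    also have "(2 * real dm + 1) * c = 1" by (simp add: c_def)
    finally show ?thesis by simp
  qed
  finally show ?thesis
    using PS0 PSout by (simp add: N_def q1_def r_def B2_def)
qed

lemma one_minus_pow_le_exp:
  fixes x :: real assumes "0 \<le> x" "x \<le> 1"
  shows "(1 - x) ^ n \<le> exp (- (real n * x))"
proof -
  have "(1 - x) ^ n \<le> exp (- x) ^ n"
    using assms exp_ge_add_one_self[of "- x"] by (intro power_mono) auto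
  also have "\<dots> = exp (- (real n * x))" by (simp add: exp_of_nat_mult[symmetric])
  finally show ?thesis .
qed

lemma lim_expL:
  fixes \<beta> :: real assumes "\<beta> < 0"
  shows "(\<lambda>k. exp (\<beta> * (real k * ln 2))) \<longlonglongrightarrow> 0"
proof -
  have e: "exp (\<beta> * (real k * ln 2)) = exp (\<beta> * ln 2) ^ k" for k
    by (simp add: exp_of_nat_mult[symmetric] algebra_simps)
  have "\<beta> * ln 2 < 0" using assms by (simp add: mult_neg_pos)
  then have "exp (\<beta> * ln 2) < 1" by simp
  then show ?thesis unfolding e by (intro LIMSEQ_power_zero) auto
qed

lemma q1_bound:
  assumes b: "0 < b" and r: "0 \<le> r"
  shows "measure cgauss {w. r < b * cmod w} \<le> exp (- ((r / b)\<^sup>2))"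
proof -
  have "{w. r < b * cmod w} \<subseteq> {w. (r / b)\<^sup>2 \<le> (cmod w)\<^sup>2}"
  proof
    fix w assume "w \<in> {w. r < b * cmod w}"
    then have "r / b < cmod w" using b by (simp add: divide_less_eq mult.commute)
    then have "r / b \<le> cmod w" by simp
    then have "(r / b)\<^sup>2 \<le> (cmod w)\<^sup>2" using r b by (intro power_mono) auto
    then show "w \<in> {w. (r / b)\<^sup>2 \<le> (cmod w)\<^sup>2}" by simp
  qed
  moreover have "{w. (r / b)\<^sup>2 \<le> (cmod w)\<^sup>2} \<in> sets cgauss"
    unfolding sets_cgauss by (intro borel_closed closed_Collect_le) (auto intro!: continuous_intros)
  ultimately have "measure cgauss {w. r < b * cmod w} \<le> measure cgauss {w. (r / b)\<^sup>2 \<le> (cmod w)\<^sup>2}"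
    by (rule cg.finite_measure_mono)
  also have "\<dots> = exp (- ((r / b)\<^sup>2))" by (rule cgauss_tail_measure) simp
  finally show ?thesis .
qed

lemma cs_bound:
  fixes \<rho> u w :: complex
  defines "b \<equiv> sqrt (1 - (cmod \<rho>)\<^sup>2)"
  assumes a1: "cmod \<rho> \<le> 1"
  shows "(cmod (\<rho> * u + complex_of_real b * w))\<^sup>2 \<le> (cmod u)\<^sup>2 + (cmod w)\<^sup>2"
proof -
  have b0: "0 \<le> b" unfolding b_def using a1 by (simp add: power_le_one)
  have bb: "b\<^sup>2 = 1 - (cmod \<rho>)\<^sup>2" unfolding b_def using a1 by (simp add: power_le_one)
  have "cmod (\<rho> * u + complex_of_real b * w) \<le> cmod \<rho> * cmod u + b * cmod w"
    using norm_triangle_ineq[of "\<rho> * u" "complex_of_real b * w"] b0 by (simp add: norm_mult)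
  then have "(cmod (\<rho> * u + complex_of_real b * w))\<^sup>2 \<le> (cmod \<rho> * cmod u + b * cmod w)\<^sup>2"
    by (intro power_mono) auto
  also have "\<dots> \<le> ((cmod \<rho>)\<^sup>2 + b\<^sup>2) * ((cmod u)\<^sup>2 + (cmod w)\<^sup>2)"
  proof -
    have "0 \<le> (cmod \<rho> * cmod w - b * cmod u)\<^sup>2" by simp
    then show ?thesis by (simp add: power2_eq_square algebra_simps)
  qed
  also have "\<dots> = (cmod u)\<^sup>2 + (cmod w)\<^sup>2" using bb by simp
  finally show ?thesis .
qed

lemma grid_cover:
  fixes X Z v :: real and K :: nat
  assumes "0 \<le> X" "0 \<le> Z" "0 \<le> v" "v \<le> X + Z" "0 < K"
  shows "\<exists>i<K. real i * v / K \<le> X \<and> (real K - 1 - real i) * v / K \<le> Z"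
proof (cases "v = 0")
  case True then show ?thesis using assms by (intro exI[of _ 0]) auto
next
  case False
  then have v: "0 < v" using assms by simp
  define f where "f = nat \<lfloor>X * K / v\<rfloor>"
  define i where "i = min (K - 1) f"
  have fle: "real f \<le> X * K / v" using assms v by (simp add: f_def)
  have flt: "X * K / v < real f + 1" using assms v by (simp add: f_def)
  have iK: "i < K" using assms by (simp add: i_def)
  have "real i \<le> X * K / v" using fle by (simp add: i_def)
  then have c1: "real i * v / K \<le> X" using v assms by (simp add: field_simps)
  have c2: "(real K - 1 - real i) * v / K \<le> Z"
  proof (cases "i = K - 1")
    case True then show ?thesis using assms iK by (simp add: of_nat_diff)
  next
    case False
    then have "i = f" by (simp add: i_def min_def split: if_splits)
    then have "X < (real i + 1) * v / K" using flt v assms by (simp add: field_simps)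
    moreover have "v * K \<le> (X + Z) * K" using assms by (intro mult_right_mono) auto
    ultimately show ?thesis using assms by (simp add: field_simps)
  qed
  show ?thesis using iK c1 c2 by blast
qed

lemma bound_lt1:
  fixes \<rho> :: complex and dm k K :: nat and cc c' \<eta> \<gamma> E :: real
  defines "a \<equiv> cmod \<rho>" and "b \<equiv> sqrt (1 - (cmod \<rho>)\<^sup>2)" and "L \<equiv> real k * ln 2"
  assumes a1: "a < 1" and K: "0 < K" and cc: "0 \<le> cc" "sqrt cc \<le> a"
    and \<gamma>: "\<gamma> = (a - sqrt cc)\<^sup>2 / b\<^sup>2" and c': "c' = cc * (real K - 1) / real K"
    and \<eta>: "0 \<le> \<eta>" "\<eta> \<le> 1"
    and dm: "real dm \<le> exp (E * L)"
  shows "mmie_perr \<rho> dm k \<le> exp (- \<eta> * L) + exp ((\<eta> - \<gamma> * (1 - \<eta>)) * L) + 2 * K * exp ((\<eta> + E - c' * (1 - \<eta>)) * L)"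
proof -
  define \<tau> where "\<tau> = (1 - \<eta>) * L"
  define v where "v = cc * \<tau>"
  define tx where "tx i = real i * v / K" for i :: nat
  define tz where "tz i = real (K - 1 - i) * v / K" for i :: nat
  have L0: "0 \<le> L" by (simp add: L_def)
  have tau: "0 \<le> \<tau>" using \<eta> L0 by (simp add: \<tau>_def)
  have v: "0 \<le> v" using cc tau by (simp add: v_def)
  have b: "0 < b" using a1 by (simp add: b_def a_def power_less_one_iff abs_less_iff)
  have a1': "cmod \<rho> \<le> 1" using a1 by (simp add: a_def)
  have txn: "0 \<le> tx i" for i using v by (simp add: tx_def)
  have tzn: "0 \<le> tz i" for i using v by (simp add: tz_def)
  have cover: "\<exists>i<K. tx i \<le> (cmod u)\<^sup>2 \<and> tz i \<le> (cmod w)\<^sup>2"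
    if "v \<le> (cmod (\<rho> * u + complex_of_real b * w))\<^sup>2" for u w
  proof -
    have "v \<le> (cmod u)\<^sup>2 + (cmod w)\<^sup>2" using that cs_bound[OF a1'] by (simp add: b_def) (smt (verit) cs_bound[OF a1'])
    from grid_cover[OF _ _ v this K] obtain i where i: "i < K" "real i * v / K \<le> (cmod u)\<^sup>2"
      "(real K - 1 - real i) * v / K \<le> (cmod w)\<^sup>2" by auto
    have e: "real (K - 1 - i) = real K - 1 - real i" using i(1) by (simp add: of_nat_diff)
    have "tz i \<le> (cmod w)\<^sup>2" unfolding tz_def e by (rule i(3))
    moreover have "tx i \<le> (cmod u)\<^sup>2" unfolding tx_def by (rule i(2))
    ultimately show ?thesis using i(1) by blast
  qed
  note MB = main_bound[OF a1' tau v txn tzn cover[unfolded b_def]]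
  have N: "(2::real) ^ k = exp L"
    unfolding L_def exp_of_nat_mult by simp
  have Nt: "(2::real) ^ k * exp (- \<tau>) = exp (\<eta> * L)"
    unfolding N by (simp add: \<tau>_def exp_add[symmetric] algebra_simps)
  have T1: "(1 - exp (- \<tau>)) ^ (2^k) \<le> exp (- \<eta> * L)"
  proof -
    have "(1 - exp (- \<tau>)) ^ (2^k) \<le> exp (- (real (2^k) * exp (- \<tau>)))"
      using tau by (intro one_minus_pow_le_exp) auto
    also have "real (2^k) * exp (- \<tau>) = exp (\<eta> * L)" using Nt by simp
    also have "exp (- exp (\<eta> * L)) \<le> exp (- \<eta> * L)"
      using exp_ge_add_one_self[of "\<eta> * L"] by (simp del: exp_ge_add_one_self)
    finally show ?thesis .
  qed
  define r where "r = cmod \<rho> * sqrt \<tau> - sqrt v"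
  have r: "r = (a - sqrt cc) * sqrt \<tau>" by (simp add: r_def v_def a_def real_sqrt_mult algebra_simps)
  have r0: "0 \<le> r" unfolding r using cc tau by (intro mult_nonneg_nonneg) auto
  have q1: "measure cgauss {w. r < b * cmod w} \<le> exp (- (\<gamma> * \<tau>))"
  proof -
    have "(r / b)\<^sup>2 = \<gamma> * \<tau>" unfolding r \<gamma> using tau by (simp add: power_divide power_mult_distrib)
    then show ?thesis using q1_bound[OF b r0] by simp
  qed
  have B2: "(\<Sum>i<K. exp (- tx i) * exp (- tz i)) = K * exp (- (c' * \<tau>))"
  proof -
    have "exp (- tx i) * exp (- tz i) = exp (- (c' * \<tau>))" if "i < K" for i
    proof -
      have "real (K - 1 - i) = real K - 1 - real i" using that by (simp add: of_nat_diff)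
      then have "tx i + tz i = c' * \<tau>" using K by (simp add: tx_def tz_def c' v_def field_simps)
      then show ?thesis by (simp add: exp_add[symmetric])
    qed
    then show ?thesis by simp
  qed
  have T23: "2^k * exp (- \<tau>) * (measure cgauss {w. r < b * cmod w} + 2 * dm * (\<Sum>i<K. exp (- tx i) * exp (- tz i)))
     \<le> exp ((\<eta> - \<gamma> * (1 - \<eta>)) * L) + 2 * K * exp ((\<eta> + E - c' * (1 - \<eta>)) * L)"
  proof -
    have "2^k * exp (- \<tau>) * (measure cgauss {w. r < b * cmod w} + 2 * dm * (\<Sum>i<K. exp (- tx i) * exp (- tz i)))
       = exp (\<eta> * L) * measure cgauss {w. r < b * cmod w} + exp (\<eta> * L) * (2 * dm * (K * exp (- (c' * \<tau>))))"
      unfolding Nt B2 by (simp add: algebra_simps)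
    also have "\<dots> \<le> exp (\<eta> * L) * exp (- (\<gamma> * \<tau>)) + exp (\<eta> * L) * (2 * exp (E * L) * (K * exp (- (c' * \<tau>))))"
      using q1 dm by (intro add_mono mult_left_mono mult_right_mono) auto
    also have "exp (\<eta> * L) * exp (- (\<gamma> * \<tau>)) = exp ((\<eta> - \<gamma> * (1 - \<eta>)) * L)"
      by (simp add: \<tau>_def exp_add[symmetric] algebra_simps)
    also have "exp (\<eta> * L) * (2 * exp (E * L) * (K * exp (- (c' * \<tau>)))) = 2 * K * exp ((\<eta> + E - c' * (1 - \<eta>)) * L)"
      by (simp add: \<tau>_def exp_add[symmetric] algebra_simps)
    finally show ?thesis .
  qed
  have MB': "mmie_perr \<rho> dm k \<le> (1 - exp (- \<tau>)) ^ (2^k) + 2^k * exp (- \<tau>) *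
           (measure cgauss {w. r < b * cmod w} + 2 * dm * (\<Sum>i<K. exp (- tx i) * exp (- tz i)))"
    using MB[of dm k] unfolding r_def b_def .
  show ?thesis
    using MB' T1 T23 by linarith
qed

lemma bound_eq1:
  fixes \<rho> :: complex and dm k :: nat and \<theta> :: real
  assumes a: "cmod \<rho> = 1" and th: "0 < \<theta>" and big: "1 \<le> 2^k * \<theta>" and dmq: "real dm \<le> 2^k * \<theta>^3"
  shows "mmie_perr \<rho> dm k \<le> 3 * \<theta>"
proof -
  define N :: real where "N = 2^k"
  have N0: "0 < N" by (simp add: N_def)
  define \<tau> where "\<tau> = ln (N * \<theta>)"
  have tau: "0 \<le> \<tau>" using big by (simp add: \<tau>_def N_def)
  have et: "exp (- \<tau>) = 1 / (N * \<theta>)"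
    using N0 th by (simp add: \<tau>_def exp_minus field_simps)
  have a1: "cmod \<rho> \<le> 1" using a by simp
  have b0: "sqrt (1 - (cmod \<rho>)\<^sup>2) = 0" using a by simp
  have cover: "\<exists>i<(1::nat). (\<lambda>_::nat. \<tau>) i \<le> (cmod u)\<^sup>2 \<and> (\<lambda>_::nat. 0::real) i \<le> (cmod w)\<^sup>2"
    if "\<tau> \<le> (cmod (\<rho> * u + complex_of_real (sqrt (1 - (cmod \<rho>)\<^sup>2)) * w))\<^sup>2" for u w
    using that a by (auto simp: b0 norm_mult intro: exI[of _ 0])
  note MB = main_bound[OF a1 tau tau _ _ cover, of dm k, simplified]
  have q1: "{w. cmod \<rho> * sqrt \<tau> - sqrt \<tau> < sqrt (1 - (cmod \<rho>)\<^sup>2) * cmod w} = {}"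
    using a by (auto simp: b0)
  have "mmie_perr \<rho> dm k \<le> (1 - exp (- \<tau>)) ^ (2^k) + N * exp (- \<tau>) * (2 * dm * exp (- \<tau>))"
    using MB q1 tau by (simp add: N_def)
  also have "(1 - exp (- \<tau>)) ^ (2^k) \<le> exp (- (real (2^k) * exp (- \<tau>)))"
    using tau by (intro one_minus_pow_le_exp) auto
  also have "real (2^k) * exp (- \<tau>) = 1 / \<theta>" using et N0 th by (simp add: N_def)
  also have "exp (- (1 / \<theta>)) \<le> \<theta>"
  proof -
    have "1 / \<theta> \<le> exp (1 / \<theta>)" using exp_ge_add_one_self[of "1 / \<theta>"] by (simp del: exp_ge_add_one_self)
    then have "1 / exp (1 / \<theta>) \<le> \<theta>" using th by (simp add: field_simps)
    then show ?thesis by (simp add: exp_minus field_simps)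
  qed
  also have "N * exp (- \<tau>) * (2 * dm * exp (- \<tau>)) = 2 * dm / (N * \<theta>\<^sup>2)"
    unfolding et using N0 th by (simp add: field_simps power2_eq_square)
  also have "\<dots> \<le> 2 * (N * \<theta>^3) / (N * \<theta>\<^sup>2)"
    using dmq N0 th by (intro divide_right_mono mult_left_mono) (auto simp: N_def)
  also have "\<dots> = 2 * \<theta>" using N0 th by (simp add: field_simps power2_eq_square power3_eq_cube)
  finally show ?thesis by simp
qed

lemma perr_nonneg: "0 \<le> mmie_perr \<rho> dm k"
  by (simp add: mmie_perr_def)

lemma lim_lt1:
  fixes \<rho> :: complex and dm :: "nat \<Rightarrow> nat"
  assumes a0: "0 < cmod \<rho>" and a1: "cmod \<rho> < 1"
    and o: "(\<lambda>k. real (dm k)) \<in> o(\<lambda>k. 2 powr (real k * mmie_E \<rho>))"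
  shows "(\<lambda>k. mmie_perr \<rho> (dm k) k) \<longlonglongrightarrow> 0"
proof -
  define a where "a = cmod \<rho>"
  define q where "q = a\<^sup>2"
  define E where "E = mmie_E \<rho>"
  define b where "b = sqrt (1 - (cmod \<rho>)\<^sup>2)"
  have q0: "0 < q" using a0 by (simp add: q_def a_def)
  have q1: "q < 1" using a1 a0 by (simp add: q_def a_def power_less_one_iff)
  have Eq: "E = q / (2 - q)" by (simp add: E_def mmie_E_def q_def a_def)
  have E0: "0 < E" using q0 q1 by (simp add: Eq)
  have Elq: "E < q" using q0 q1 by (simp add: Eq field_simps)
  define cc where "cc = (E + q) / 2"
  have cc0: "0 \<le> cc" and ccE: "E < cc" and ccq: "cc < q" using E0 Elq by (auto simp: cc_def)
  have a_pos: "0 \<le> a" by (simp add: a_def)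
  have sq: "sqrt cc < a"
  proof -
    have "sqrt cc < sqrt q" using ccq by simp
    also have "sqrt q = a" using a_pos by (simp add: q_def)
    finally show ?thesis .
  qed
  have bb: "b\<^sup>2 = 1 - q" using q1 by (simp add: b_def q_def a_def)
  define \<gamma> where "\<gamma> = (a - sqrt cc)\<^sup>2 / b\<^sup>2"
  have \<gamma>0: "0 < \<gamma>" using sq q1 by (simp add: \<gamma>_def bb)
  define K :: nat where "K = nat \<lceil>cc / (cc - E)\<rceil> + 1"
  have K0: "0 < K" by (simp add: K_def)
  have Kbig: "cc / (cc - E) < real K"
  proof -
    have "cc / (cc - E) \<le> real (nat \<lceil>cc / (cc - E)\<rceil>)" by (rule real_nat_ceiling_ge)
    then show ?thesis unfolding K_def by simp
  qed
  define c' where "c' = cc * (real K - 1) / real K"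
  have c'E: "E < c'"
  proof -
    have "cc < real K * (cc - E)" using Kbig ccE by (simp add: field_simps)
    then show ?thesis using K0 by (simp add: c'_def field_simps)
  qed
  have c'0: "0 < c'" using c'E E0 by simp
  define \<eta> where "\<eta> = min (\<gamma> / (2 * (1 + \<gamma>))) ((c' - E) / (2 * (1 + c')))"
  have \<eta>0: "0 < \<eta>" using \<gamma>0 c'E c'0 by (simp add: \<eta>_def)
  have \<eta>1: "\<eta> \<le> 1"
  proof -
    have "\<gamma> / (2 * (1 + \<gamma>)) \<le> 1" using \<gamma>0 by (simp add: field_simps)
    then show ?thesis by (simp add: \<eta>_def)
  qed
  have \<beta>2: "\<eta> - \<gamma> * (1 - \<eta>) < 0"
  proof -
    have "\<eta> \<le> \<gamma> / (2 * (1 + \<gamma>))" by (simp add: \<eta>_def)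
    then have "\<eta> * (1 + \<gamma>) \<le> \<gamma> / 2" using \<gamma>0 by (simp add: field_simps)
    then show ?thesis using \<gamma>0 by (simp add: algebra_simps)
  qed
  have \<beta>3: "\<eta> + E - c' * (1 - \<eta>) < 0"
  proof -
    have "\<eta> \<le> (c' - E) / (2 * (1 + c'))" by (simp add: \<eta>_def)
    then have "\<eta> * (1 + c') \<le> (c' - E) / 2" using c'0 by (simp add: field_simps)
    then show ?thesis using c'E by (simp add: algebra_simps)
  qed
  define U where "U k = exp ((- \<eta>) * (real k * ln 2)) + exp ((\<eta> - \<gamma> * (1 - \<eta>)) * (real k * ln 2))
     + 2 * real K * exp ((\<eta> + E - c' * (1 - \<eta>)) * (real k * ln 2))" for k
  have U: "U \<longlonglongrightarrow> 0"
  proof -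
    have "U \<longlonglongrightarrow> 0 + 0 + 2 * real K * 0"
      unfolding U_def using \<eta>0 \<beta>2 \<beta>3
      by (intro tendsto_add tendsto_mult tendsto_const lim_expL) auto
    then show ?thesis by simp
  qed
  have ev: "eventually (\<lambda>k. norm (real (dm k)) \<le> 1 * norm (2 powr (real k * mmie_E \<rho>))) at_top"
    using landau_o.smallD[OF o, of 1] by simp
  have bnd: "eventually (\<lambda>k. mmie_perr \<rho> (dm k) k \<le> U k) at_top"
    using ev
  proof eventually_elim
    case (elim k)
    have "2 powr (real k * mmie_E \<rho>) = exp (E * (real k * ln 2))"
      by (simp add: powr_def E_def algebra_simps)
    then have dmb: "real (dm k) \<le> exp (E * (real k * ln 2))" using elim by simp
    show ?case
      using bound_lt1[of \<rho> K cc \<gamma> c' \<eta> "dm k" E k, folded a_def b_def] a1 K0 cc0 sq \<gamma>_def c'_def \<eta>0 \<eta>1 dmb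
      unfolding U_def a_def by simp
  qed
  show ?thesis
    by (rule tendsto_sandwich[OF _ bnd tendsto_const U]) (simp add: perr_nonneg)
qed

lemma lim_eq1:
  fixes \<rho> :: complex and dm :: "nat \<Rightarrow> nat"
  assumes a: "cmod \<rho> = 1"
    and o: "(\<lambda>k. real (dm k)) \<in> o(\<lambda>k. 2 powr (real k * mmie_E \<rho>))"
  shows "(\<lambda>k. mmie_perr \<rho> (dm k) k) \<longlonglongrightarrow> 0"
proof -
  have E1: "mmie_E \<rho> = 1" using a by (simp add: mmie_E_def)
  have pw: "2 powr (real k * mmie_E \<rho>) = 2 ^ k" for k by (simp add: E1 powr_realpow)
  have l1: "(\<lambda>k. real (dm k) / 2 ^ k) \<longlonglongrightarrow> 0"
    using smalloD_tendsto[OF o] by (simp add: pw)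
  define q where "q k = (real (dm k) + 1) / 2 ^ k" for k
  have l2: "(\<lambda>k. (1::real) / 2 ^ k) \<longlonglongrightarrow> 0"
  proof -
    have "(\<lambda>k. (1 / 2 :: real) ^ k) \<longlonglongrightarrow> 0" by (intro LIMSEQ_power_zero) auto
    then show ?thesis by (simp add: power_one_over)
  qed
  have qlim: "q \<longlonglongrightarrow> 0"
  proof -
    have "(\<lambda>k. real (dm k) / 2 ^ k + 1 / 2 ^ k) \<longlonglongrightarrow> 0 + 0" by (intro tendsto_add l1 l2)
    moreover have "q = (\<lambda>k. real (dm k) / 2 ^ k + 1 / 2 ^ k)"
      by (simp add: q_def add_divide_distrib fun_eq_iff)
    ultimately show ?thesis by simp
  qed
  define \<theta> where "\<theta> k = root 3 (q k)" for k
  have thlim: "\<theta> \<longlonglongrightarrow> 0"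
    unfolding \<theta>_def using tendsto_real_root[OF qlim, of 3] by simp
  have q0: "0 < q k" for k by (simp add: q_def add_pos_nonneg)
  have evq: "eventually (\<lambda>k. q k < 1) at_top"
    using order_tendstoD(2)[OF qlim, of 1] by simp
  have bnd: "eventually (\<lambda>k. mmie_perr \<rho> (dm k) k \<le> 3 * \<theta> k) at_top"
    using evq
  proof eventually_elim
    case (elim k)
    have th0: "0 < \<theta> k" using q0[of k] by (simp add: \<theta>_def)
    have th3: "\<theta> k ^ 3 = q k" using q0[of k] by (simp add: \<theta>_def)
    have th1: "\<theta> k \<le> 1" using elim q0[of k] by (simp add: \<theta>_def)
    have "q k = \<theta> k ^ 3" by (rule th3[symmetric])
    also have "\<dots> \<le> \<theta> k ^ 1" using th0 th1 by (intro power_decreasing) auto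
    finally have qth: "q k \<le> \<theta> k" by simp
    have "1 \<le> real (dm k) + 1" by simp
    also have "real (dm k) + 1 = 2 ^ k * q k" by (simp add: q_def)
    also have "\<dots> \<le> 2 ^ k * \<theta> k" using qth by simp
    finally have big: "1 \<le> 2 ^ k * \<theta> k" .
    have dmq: "real (dm k) \<le> 2 ^ k * \<theta> k ^ 3" unfolding th3 by (simp add: q_def)
    show ?case by (rule bound_eq1[OF a th0 big dmq])
  qed
  have "(\<lambda>k. 3 * \<theta> k) \<longlonglongrightarrow> 3 * 0" by (intro tendsto_mult tendsto_const thlim)
  then have l3: "(\<lambda>k. 3 * \<theta> k) \<longlonglongrightarrow> 0" by simp
  show ?thesis
    by (rule tendsto_sandwich[OF _ bnd tendsto_const l3]) (simp add: perr_nonneg)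
qed

lemma lim_main:
  fixes \<rho> :: complex and dm :: "nat \<Rightarrow> nat"
  assumes a0: "0 < cmod \<rho>" and a1: "cmod \<rho> \<le> 1"
    and o: "(\<lambda>k. real (dm k)) \<in> o(\<lambda>k. 2 powr (real k * mmie_E \<rho>))"
  shows "(\<lambda>k. mmie_perr \<rho> (dm k) k) \<longlonglongrightarrow> 0"
proof (cases "cmod \<rho> = 1")
  case True then show ?thesis using lim_eq1 o by blast
next
  case False then show ?thesis using lim_lt1 a0 a1 o by simp
qed

lemma const_small:
  fixes \<rho> :: complex and c :: nat
  assumes a0: "0 < cmod \<rho>" and a1: "cmod \<rho> \<le> 1"
  shows "(\<lambda>k::nat. real c) \<in> o(\<lambda>k. 2 powr (real k * mmie_E \<rho>))"
proof (rule smalloI_tendsto)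
  define E where "E = mmie_E \<rho>"
  have q1: "(cmod \<rho>)\<^sup>2 \<le> 1" using a1 by (simp add: power_le_one)
  have E0: "0 < E" using a0 q1 by (simp add: E_def mmie_E_def)
  have e: "real c / 2 powr (real k * E) = real c * exp ((- E) * (real k * ln 2))" for k
    by (simp add: powr_def exp_minus field_simps)
  have "(\<lambda>k. real c * exp ((- E) * (real k * ln 2))) \<longlonglongrightarrow> real c * 0"
    using E0 by (intro tendsto_mult tendsto_const lim_expL) auto
  then show "(\<lambda>k. real c / 2 powr (real k * mmie_E \<rho>)) \<longlonglongrightarrow> 0"
    by (simp add: e[unfolded E_def] E_def)
  show "eventually (\<lambda>k. 2 powr (real k * mmie_E \<rho>) \<noteq> 0) at_top" by simp
qed

theorem corollary1:
  fixes \<rho> :: complex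
  assumes "0 < cmod \<rho>" and "cmod \<rho> \<le> 1"
  shows "(\<forall>dm::nat. (\<forall>k. mmie_error_event \<rho> dm k \<in> sets (delay_space dm))
                    \<and> (\<lambda>k. mmie_perr \<rho> dm k) \<longlonglongrightarrow> 0)
     \<and> (\<forall>dm::nat \<Rightarrow> nat. (\<lambda>k. real (dm k)) \<in> o(\<lambda>k. 2 powr (real k * mmie_E \<rho>)) \<longrightarrow>
           (\<forall>k. mmie_error_event \<rho> (dm k) k \<in> sets (delay_space (dm k)))
           \<and> (\<lambda>k. mmie_perr \<rho> (dm k) k) \<longlonglongrightarrow> 0)"
proof (intro conjI allI impI)
  fix dm :: nat and k :: nat
  show "mmie_error_event \<rho> dm k \<in> sets (delay_space dm)" by (rule error_event_sets)
next
  fix dm :: nat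
  show "(\<lambda>k. mmie_perr \<rho> dm k) \<longlonglongrightarrow> 0"
    using lim_main[OF assms const_small[OF assms, of dm]] by simp
next
  fix dm :: "nat \<Rightarrow> nat" and k :: nat
  show "mmie_error_event \<rho> (dm k) k \<in> sets (delay_space (dm k))" by (rule error_event_sets)
next
  fix dm :: "nat \<Rightarrow> nat"
  assume "(\<lambda>k. real (dm k)) \<in> o(\<lambda>k. 2 powr (real k * mmie_E \<rho>))"
  then show "(\<lambda>k. mmie_perr \<rho> (dm k) k) \<longlonglongrightarrow> 0" by (rule lim_main[OF assms])
qed

end
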